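(* There is a universal constant $C>0$ such that the following holds. Fix $\delta\in(0,1)$ and step size $\alpha>0$, and let $B_{N,d,\delta} := 1 + C\Big(\sqrt{\frac{d\log(2d/\delta)}{N}} + \frac{d\log(2d/\delta)}{N}\Big)$. If \[ a_\star \le \min\Big\{1, \frac{1}{2\alpha B_{N,d,\delta}}\Big\}, \] then with probability at least $1-\delta$ the stability event \[ \alpha|a_t|\,\|\widehat M\|_2 \le \tfrac12 \quad\text{for all } t < T_\star := \min\{t : |a_t|\ge a_\star\} \] holds.
   Context: Samples $(x^{(s)},y^{(s)})_{s=1}^N$ are i.i.d. with $x^{(s)}$ uniform on $\{\pm1\}^d$, $y^{(s)} = x^{(s)}_1x^{(s)}_2$; $\widehat M := \frac1N\sum_{s} y^{(s)}x^{(s)}x^{(s)\top}$. Phase-1 updates: $a_{t+1} = \mathrm{clip}_{[-1,1]}(a_t + \frac\alpha2 w_t^\top\widehat M w_t)$, $w_{t+1} = \frac{w_t+\alpha a_t\widehat M w_t}{\|w_t+\alpha a_t\widehat M w_t\|_2}$, from a unit vector $w_0$ and scalar $a_0$. $\|\cdot\|_2$ is the operator norm. *)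

theory Defs
  imports "HOL-Probability.Probability"
begin

text \<open>Vectors in R^d are functions nat => real (only indices < d matter);
  d x d matrices are functions nat => nat => real. Coordinates x_1, x_2 of the
  paper are indices 0, 1 here. A sample set is X :: nat => nat => real, with
  X s = x^(s+1) for s < N.\<close>

definition vnorm :: "nat \<Rightarrow> (nat \<Rightarrow> real) \<Rightarrow> real" where
  "vnorm d v = sqrt (\<Sum>i<d. (v i)\<^sup>2)"

definition matvec :: "nat \<Rightarrow> (nat \<Rightarrow> nat \<Rightarrow> real) \<Rightarrow> (nat \<Rightarrow> real) \<Rightarrow> nat \<Rightarrow> real" where
  "matvec d M v i = (\<Sum>j<d. M i j * v j)"

definition quadform :: "nat \<Rightarrow> (nat \<Rightarrow> nat \<Rightarrow> real) \<Rightarrow> (nat \<Rightarrow> real) \<Rightarrow> real" where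
  "quadform d M v = (\<Sum>i<d. v i * matvec d M v i)"

definition opnorm :: "nat \<Rightarrow> (nat \<Rightarrow> nat \<Rightarrow> real) \<Rightarrow> real" where
  "opnorm d M = Sup {vnorm d (matvec d M v) | v. vnorm d v \<le> 1}"

definition clip :: "real \<Rightarrow> real" where
  "clip x = max (-1) (min 1 x)"

definition samples :: "nat \<Rightarrow> nat \<Rightarrow> (nat \<Rightarrow> nat \<Rightarrow> real) set" where
  "samples N d = {X. (\<forall>s<N. \<forall>i<d. X s i \<in> {-1, 1}) \<and>
                      (\<forall>s i. (N \<le> s \<or> d \<le> i) \<longrightarrow> X s i = 0)}"

text \<open>Label y = x_1 x_2 and empirical matrix Mhat = (1/N) sum_s y x x^T.\<close>
definition Mhat :: "nat \<Rightarrow> (nat \<Rightarrow> nat \<Rightarrow> real) \<Rightarrow> nat \<Rightarrow> nat \<Rightarrow> real" where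
  "Mhat N X i j = (1 / real N) * (\<Sum>s<N. (X s 0 * X s 1) * X s i * X s j)"

fun traj :: "nat \<Rightarrow> real \<Rightarrow> (nat \<Rightarrow> nat \<Rightarrow> real) \<Rightarrow> real \<Rightarrow> (nat \<Rightarrow> real) \<Rightarrow> nat
             \<Rightarrow> real \<times> (nat \<Rightarrow> real)" where
  "traj d \<alpha> M a0 w0 0 = (a0, w0)"
| "traj d \<alpha> M a0 w0 (Suc t) =
     (let (a, w) = traj d \<alpha> M a0 w0 t;
          u = (\<lambda>i. w i + \<alpha> * a * matvec d M w i)
      in (clip (a + \<alpha> / 2 * quadform d M w), (\<lambda>i. u i / vnorm d u)))"

definition Bnd :: "real \<Rightarrow> nat \<Rightarrow> nat \<Rightarrow> real \<Rightarrow> real" where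
  "Bnd C N d \<delta> = 1 + C * (sqrt (real d * ln (2 * real d / \<delta>) / real N)
                           + real d * ln (2 * real d / \<delta>) / real N)"

text \<open>Stability event: alpha |a_t| ||Mhat|| <= 1/2 for all t < T_star, where
  T_star = min {t. |a_t| >= a_star} (infinite if the set is empty).\<close>
definition stable_event :: "nat \<Rightarrow> nat \<Rightarrow> real \<Rightarrow> real \<Rightarrow> (nat \<Rightarrow> real) \<Rightarrow> real
                            \<Rightarrow> (nat \<Rightarrow> nat \<Rightarrow> real) \<Rightarrow> bool" where
  "stable_event N d \<alpha> a0 w0 astar X \<longleftrightarrow>
     (\<forall>t. (\<forall>s\<le>t. \<bar>fst (traj d \<alpha> (Mhat N X) a0 w0 s)\<bar> < astar) \<longrightarrow>
          \<alpha> * \<bar>fst (traj d \<alpha> (Mhat N X) a0 w0 t)\<bar> * opnorm d (Mhat N X) \<le> 1 / 2)"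

end

theory Submission
  imports Defs
begin

lemma fact_double: "(2::real)^k * fact k \<le> fact (2*k)"
proof (induction k)
  case 0 then show ?case by simp
next
  case (Suc k)
  have "(2::real)^(Suc k) * fact (Suc k) = (2 * real (Suc k)) * (2^k * fact k)" by (simp add: algebra_simps)
  also have "\<dots> \<le> (2 * real (Suc k)) * fact (2*k)" using Suc by (intro mult_left_mono) auto
  also have "\<dots> \<le> (real (Suc (Suc (2*k))) * real (Suc (2*k))) * fact (2*k)"
    by (intro mult_right_mono) (auto simp: algebra_simps)
  also have "\<dots> = (real (Suc (Suc (2*k)))) * (real (Suc (2*k)) * fact (2*k))" by (simp only: mult.assoc)
  also have "\<dots> = fact (Suc (Suc (2*k)))"
    by (simp only: fact_Suc)
  also have "Suc (Suc (2*k)) = 2 * Suc k" by simp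
  finally show ?case .
qed

lemma cosh_le_exp_sq: "cosh (x::real) \<le> exp (x\<^sup>2/2)"
proof -
  have 1: "(\<lambda>n. if even n then x^n /\<^sub>R fact n else 0) sums cosh x" by (rule cosh_converges)
  have e: "(\<lambda>n. (x\<^sup>2/2)^n /\<^sub>R fact n) sums exp (x\<^sup>2/2)" by (rule exp_converges)
  have z: "(\<lambda>n. 0::real) sums 0" by simp
  from sums_if[OF z e] have 2: "(\<lambda>n. if even n then (x\<^sup>2/2)^(n div 2) /\<^sub>R fact (n div 2) else 0) sums exp (x\<^sup>2/2)"
    by simp
  show ?thesis
  proof (rule sums_le[OF _ 1 2])
    fix n :: nat
    show "(if even n then x^n /\<^sub>R fact n else 0) \<le> (if even n then (x\<^sup>2/2)^(n div 2) /\<^sub>R fact (n div 2) else 0)"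
    proof (cases "even n")
      case True
      then obtain k where n: "n = 2*k" by blast
      have xx: "x^(2*k) = (x\<^sup>2)^k" by (simp add: power_mult)
      have pos: "0 \<le> (x\<^sup>2)^k" by simp
      have "x^n / fact n \<le> (x\<^sup>2)^k / (2^k * fact k)"
        unfolding n xx
        by (rule divide_left_mono[OF fact_double pos]) simp
      also have "\<dots> = (x\<^sup>2/2)^k / fact k" by (simp add: power_divide)
      finally have c: "x^n / fact n \<le> (x\<^sup>2/2)^k / fact k" .
      have k: "n div 2 = k" using n by simp
      have e1: "x^n /\<^sub>R fact n = x^n / fact n" by (simp only: real_scaleR_def divide_inverse mult.commute)
      have e2: "(x\<^sup>2/2)^k /\<^sub>R fact k = (x\<^sup>2/2)^k / fact k" by (simp only: real_scaleR_def divide_inverse mult.commute)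
      show ?thesis using True c unfolding k e1 e2 by (simp only: if_True)
    qed simp
  qed
qed

definition cubeset :: "nat \<Rightarrow> (nat \<Rightarrow> real) set" where
  "cubeset d = PiE_dflt {..<d} 0 (\<lambda>_. {-1,1})"

definition Qd :: "nat \<Rightarrow> (nat \<Rightarrow> real) pmf" where
  "Qd d = Pi_pmf {..<d} 0 (\<lambda>_. pmf_of_set {-1,1})"

lemma Qd_eq: "Qd d = pmf_of_set (cubeset d)"
  unfolding Qd_def cubeset_def by (rule Pi_pmf_of_set) auto

lemma finite_cubeset: "finite (cubeset d)"
  unfolding cubeset_def by (rule finite_PiE_dflt) auto

lemma cubeset_ne: "cubeset d \<noteq> {}"
  unfolding cubeset_def by simp

lemma set_pmf_Qd: "set_pmf (Qd d) = cubeset d"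
  unfolding Qd_eq by (rule set_pmf_of_set[OF cubeset_ne finite_cubeset])

lemma finite_set_pmf_Qd: "finite (set_pmf (Qd d))"
  using set_pmf_Qd finite_cubeset by simp

lemma integrable_Qd [simp]: "integrable (measure_pmf (Qd d)) (f :: _ \<Rightarrow> real)"
  by (rule integrable_measure_pmf_finite[OF finite_set_pmf_Qd])

lemma cubeset_mem: "x \<in> cubeset d \<longleftrightarrow> (\<forall>i<d. x i = -1 \<or> x i = 1) \<and> (\<forall>i\<ge>d. x i = 0)"
  unfolding cubeset_def PiE_dflt_def mem_Collect_eq lessThan_iff insert_iff empty_iff not_less[symmetric] by blast

definition dot :: "nat \<Rightarrow> (nat \<Rightarrow> real) \<Rightarrow> (nat \<Rightarrow> real) \<Rightarrow> real" where
  "dot d w x = (\<Sum>i<d. w i * x i)"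

lemma E_pm1: "measure_pmf.expectation (pmf_of_set {-1,1::real}) (f :: real \<Rightarrow> real) = (f (-1) + f 1) / 2"
  by (subst integral_pmf_of_set) auto

lemma mgf_dot:
  "measure_pmf.expectation (Qd d) (\<lambda>x. exp (\<theta> * dot d w x)) \<le> exp (\<theta>\<^sup>2 * (\<Sum>i<d. (w i)\<^sup>2) / 2)"
proof -
  have eq: "(\<lambda>x. exp (\<theta> * dot d w x)) = (\<lambda>x. \<Prod>i<d. exp (\<theta> * w i * x i))"
    by (auto simp: dot_def sum_distrib_left exp_sum mult.assoc)
  have "measure_pmf.expectation (Qd d) (\<lambda>x. \<Prod>i<d. exp (\<theta> * w i * x i))
      = (\<Prod>i<d. measure_pmf.expectation (pmf_of_set {-1,1}) (\<lambda>b. exp (\<theta> * w i * b)))"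
    unfolding Qd_def
    by (rule expectation_prod_Pi_pmf) (auto intro: integrable_measure_pmf_finite)
  also have "\<dots> = (\<Prod>i<d. cosh (\<theta> * w i))"
    by (intro prod.cong refl) (simp add: E_pm1 cosh_def add.commute)
  also have "\<dots> \<le> (\<Prod>i<d. exp ((\<theta> * w i)\<^sup>2 / 2))"
    by (intro prod_mono conjI cosh_le_exp_sq) auto
  also have "\<dots> = exp (\<Sum>i<d. (\<theta> * w i)\<^sup>2 / 2)"
    by (simp add: exp_sum)
  also have "(\<Sum>i<d. (\<theta> * w i)\<^sup>2 / 2) = \<theta>\<^sup>2 * (\<Sum>i<d. (w i)\<^sup>2) / 2"
    by (simp add: sum_distrib_left sum_divide_distrib power_mult_distrib)
  finally show ?thesis unfolding eq .
qed

lemma prob_le_indicator_int: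
  fixes p :: "'a pmf"
  assumes "finite (set_pmf p)" "0 \<le> \<theta>"
  shows "measure_pmf.prob p {x. a \<le> f x} \<le> measure_pmf.expectation p (\<lambda>x. exp (\<theta> * (f x - a)))"
proof -
  have "measure_pmf.prob p {x. a \<le> f x} = measure_pmf.expectation p (indicator {x. a \<le> f x})"
    by simp
  also have "\<dots> \<le> measure_pmf.expectation p (\<lambda>x. exp (\<theta> * (f x - a)))"
  proof (rule integral_mono)
    show "integrable (measure_pmf p) (indicat_real {x. a \<le> f x})"
      by (rule integrable_measure_pmf_finite[OF assms(1)])
    show "integrable (measure_pmf p) (\<lambda>x. exp (\<theta> * (f x - a)))"
      by (rule integrable_measure_pmf_finite[OF assms(1)])
    fix x
    show "indicat_real {x. a \<le> f x} x \<le> exp (\<theta> * (f x - a))"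
      using assms(2) by (auto simp: indicator_def)
  qed
  finally show ?thesis .
qed

lemma tail_dot_upper:
  assumes w: "(\<Sum>i<d. (w i)\<^sup>2) \<le> 1" and r: "0 \<le> r"
  shows "measure_pmf.prob (Qd d) {x. r \<le> dot d w x} \<le> exp (- r\<^sup>2 / 2)"
proof -
  have "measure_pmf.prob (Qd d) {x. r \<le> dot d w x} \<le> measure_pmf.expectation (Qd d) (\<lambda>x. exp (r * (dot d w x - r)))"
    by (rule prob_le_indicator_int[OF finite_set_pmf_Qd r])
  also have "(\<lambda>x. exp (r * (dot d w x - r))) = (\<lambda>x. exp (- r\<^sup>2) * exp (r * dot d w x))"
    by (auto simp: exp_add[symmetric] algebra_simps power2_eq_square)
  also have "measure_pmf.expectation (Qd d) \<dots> = exp (- r\<^sup>2) * measure_pmf.expectation (Qd d) (\<lambda>x. exp (r * dot d w x))"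
    by simp
  also have "\<dots> \<le> exp (- r\<^sup>2) * exp (r\<^sup>2 * (\<Sum>i<d. (w i)\<^sup>2) / 2)"
    by (intro mult_left_mono mgf_dot) auto
  also have "\<dots> \<le> exp (- r\<^sup>2) * exp (r\<^sup>2 / 2)"
    using w by (intro mult_left_mono) (auto simp: mult_left_le)
  also have "\<dots> = exp (- r\<^sup>2 / 2)"
    by (simp add: exp_add[symmetric])
  finally show ?thesis .
qed

lemma dot_neg: "dot d (\<lambda>i. - w i) x = - dot d w x"
  by (simp add: dot_def sum_negf)

lemma tail_dot_sq:
  assumes w: "(\<Sum>i<d. (w i)\<^sup>2) \<le> 1" and k: "0 \<le> k"
  shows "measure_pmf.prob (Qd d) {x. k \<le> (dot d w x)\<^sup>2} \<le> 2 * exp (- k / 2)"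
proof -
  have w': "(\<Sum>i<d. (- w i)\<^sup>2) \<le> 1" using w by simp
  have sub: "{x. k \<le> (dot d w x)\<^sup>2} \<subseteq> {x. sqrt k \<le> dot d w x} \<union> {x. sqrt k \<le> dot d (\<lambda>i. - w i) x}"
  proof
    fix x assume "x \<in> {x. k \<le> (dot d w x)\<^sup>2}"
    then have "sqrt k \<le> \<bar>dot d w x\<bar>" using real_sqrt_le_mono[of k "(dot d w x)\<^sup>2"] by simp
    then show "x \<in> {x. sqrt k \<le> dot d w x} \<union> {x. sqrt k \<le> dot d (\<lambda>i. - w i) x}"
      by (auto simp: dot_neg abs_if split: if_splits)
  qed
  have "measure_pmf.prob (Qd d) {x. k \<le> (dot d w x)\<^sup>2}
     \<le> measure_pmf.prob (Qd d) ({x. sqrt k \<le> dot d w x} \<union> {x. sqrt k \<le> dot d (\<lambda>i. - w i) x})"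
    by (rule measure_pmf.finite_measure_mono[OF sub]) simp
  also have "\<dots> \<le> measure_pmf.prob (Qd d) {x. sqrt k \<le> dot d w x} + measure_pmf.prob (Qd d) {x. sqrt k \<le> dot d (\<lambda>i. - w i) x}"
    by (rule measure_Un_le) auto
  also have "\<dots> \<le> exp (- (sqrt k)\<^sup>2 / 2) + exp (- (sqrt k)\<^sup>2 / 2)"
    by (intro add_mono tail_dot_upper w w') (use k in auto)
  also have "\<dots> = 2 * exp (- k / 2)" using k by simp
  finally show ?thesis .
qed

lemma abs_le_one_of_sumsq:
  fixes d i :: nat
  assumes "(\<Sum>i<d. (w i)\<^sup>2) \<le> (1::real)" "i < d"
  shows "\<bar>w i\<bar> \<le> 1"
proof -
  have "(w i)\<^sup>2 \<le> (\<Sum>i<d. (w i)\<^sup>2)"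
    using assms(2) by (intro member_le_sum[of i "{..<d}"]) auto
  then have "(w i)\<^sup>2 \<le> 1" using assms(1) by linarith
  then show ?thesis by (simp add: abs_square_le_1)
qed

lemma cube_abs: "(x::nat\<Rightarrow>real) \<in> cubeset d \<Longrightarrow> i < d \<Longrightarrow> \<bar>x i\<bar> = 1"
  unfolding cubeset_mem by force

lemma cube_sq: "(x::nat\<Rightarrow>real) \<in> cubeset d \<Longrightarrow> i < d \<Longrightarrow> (x i)\<^sup>2 = 1"
  using cube_abs by (metis abs_one power2_abs power_one)

lemma dot_bound:
  fixes d :: nat
  assumes w: "(\<Sum>i<d. (w i)\<^sup>2) \<le> 1" and x: "x \<in> cubeset d"
  shows "\<bar>dot d w x\<bar> \<le> real d"
proof -
  have "\<bar>dot d w x\<bar> \<le> (\<Sum>i<d. \<bar>w i * x i\<bar>)" unfolding dot_def by (rule sum_abs)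
  also have "\<dots> \<le> (\<Sum>i<d. 1)"
  proof (rule sum_mono)
    fix i assume "i \<in> {..<d}"
    then have "i < d" by simp
    then show "\<bar>w i * x i\<bar> \<le> 1"
      using abs_le_one_of_sumsq[OF w] cube_abs[OF x] by (simp add: abs_mult)
  qed
  finally show ?thesis by simp
qed

lemma exp_sq_pointwise:
  fixes t :: real
  assumes "0 \<le> t" "t \<le> real D"
  shows "exp (t/4) \<le> (\<Sum>k<Suc D. exp ((real k + 1)/4) * indicator {y. real k \<le> y} t)"
proof -
  define k0 where "k0 = nat \<lfloor>t\<rfloor>"
  have k0a: "real k0 \<le> t" unfolding k0_def using assms(1) by linarith
  have k0b: "t < real k0 + 1" unfolding k0_def using assms(1) by linarith
  have fl: "\<lfloor>t\<rfloor> \<le> int D" using assms(2) by (simp add: floor_le_iff)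
  have k0c: "k0 < Suc D" unfolding k0_def using fl assms(1) by (simp add: nat_less_iff)
  have "exp (t/4) \<le> exp ((real k0 + 1)/4)" using k0b by simp
  also have "\<dots> = exp ((real k0 + 1)/4) * indicator {y. real k0 \<le> y} t" using k0a by simp
  also have "\<dots> \<le> (\<Sum>k<Suc D. exp ((real k + 1)/4) * indicator {y. real k \<le> y} t)"
    by (rule member_le_sum[where f = "\<lambda>k. exp ((real k + 1)/4) * indicator {y. real k \<le> y} t"])
       (use k0c in \<open>auto simp: indicator_def\<close>)
  finally show ?thesis .
qed

lemma exp_quarter_le: "exp (1/4::real) \<le> 21/16"
  using exp_bound[of "1/4::real"] by (simp add: power2_eq_square)

lemma exp_mquarter_le: "exp (-1/4::real) \<le> 4/5"
proof -
  have "5/4 \<le> exp (1/4::real)" using exp_ge_add_one_self[of "1/4::real"] by simp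
  then have "inverse (exp (1/4::real)) \<le> inverse (5/4)" by (rule le_imp_inverse_le) simp
  then show ?thesis by (simp add: exp_minus[symmetric])
qed

lemma mgf_sq:
  fixes d :: nat
  assumes w: "(\<Sum>i<d. (w i)\<^sup>2) \<le> 1"
  shows "measure_pmf.expectation (Qd d) (\<lambda>x. exp ((dot d w x)\<^sup>2 / 4)) \<le> 14"
proof -
  define D where "D = d * d"
  define c where "c = (\<lambda>k::nat. exp ((real k + 1)/4))"
  have pw: "exp ((dot d w x)\<^sup>2 / 4) \<le> (\<Sum>k<Suc D. c k * indicator {x. real k \<le> (dot d w x)\<^sup>2} x)"
    if x: "x \<in> cubeset d" for x
  proof -
    have "\<bar>dot d w x\<bar> \<le> real d" by (rule dot_bound[OF w x])
    then have "\<bar>dot d w x\<bar>\<^sup>2 \<le> (real d)\<^sup>2"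
      by (intro power_mono) auto
    then have "(dot d w x)\<^sup>2 \<le> (real d)\<^sup>2" by (simp only: power2_abs)
    then have "(dot d w x)\<^sup>2 \<le> real D" by (simp add: D_def power2_eq_square)
    from exp_sq_pointwise[OF _ this] show ?thesis by (simp add: c_def indicator_def)
  qed
  have nn: "0 \<le> (\<Sum>k<Suc D. exp (-1/4::real) ^ k)" by (intro sum_nonneg) simp
  have "measure_pmf.expectation (Qd d) (\<lambda>x. exp ((dot d w x)\<^sup>2 / 4))
     \<le> measure_pmf.expectation (Qd d) (\<lambda>x. \<Sum>k<Suc D. c k * indicator {x. real k \<le> (dot d w x)\<^sup>2} x)"
    by (intro integral_mono_AE integrable_Qd AE_pmfI pw) (simp add: set_pmf_Qd)
  also have "\<dots> = (\<Sum>k<Suc D. c k * measure_pmf.prob (Qd d) {x. real k \<le> (dot d w x)\<^sup>2})"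
    by (subst Bochner_Integration.integral_sum) auto
  also have "\<dots> \<le> (\<Sum>k<Suc D. c k * (2 * exp (- real k / 2)))"
    by (intro sum_mono mult_left_mono tail_dot_sq w) (auto simp: c_def)
  also have "\<dots> = (\<Sum>k<Suc D. 2 * exp (1/4) * exp (-1/4) ^ k)"
  proof (intro sum.cong refl)
    fix k
    have "c k * (2 * exp (- real k / 2)) = 2 * (exp ((real k + 1)/4) * exp (- real k / 2))"
      unfolding c_def by (rule mult.left_commute)
    also have "\<dots> = 2 * exp ((real k + 1)/4 + - real k / 2)"
      by (simp only: exp_add)
    also have "\<dots> = 2 * exp (1/4 + real k * (-1/4))"
      by (rule arg_cong[where f="\<lambda>y. 2 * exp y"]) (simp add: field_simps)
    also have "\<dots> = 2 * exp (1/4) * exp (-1/4) ^ k"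
      by (simp only: exp_add exp_of_nat_mult mult.assoc)
    finally show "c k * (2 * exp (- real k / 2)) = 2 * exp (1/4) * exp (-1/4) ^ k" .
  qed
  also have "\<dots> = 2 * exp (1/4) * (\<Sum>k<Suc D. exp (-1/4) ^ k)"
    by (rule sum_distrib_left[symmetric])
  also have "(\<Sum>k<Suc D. exp (-1/4::real) ^ k) \<le> 5"
  proof -
    have q1: "exp (-1/4::real) < 1" by simp
    have "(\<Sum>k<Suc D. exp (-1/4::real) ^ k) = (1 - exp (-1/4) ^ Suc D) / (1 - exp (-1/4))"
      using q1 by (subst sum_gp_strict) simp
    also have "\<dots> \<le> 1 / (1 - exp (-1/4))"
      using q1 by (intro divide_right_mono) auto
    also have "\<dots> \<le> 1 / (1 - 4/5)"
      using exp_mquarter_le q1 by (intro divide_left_mono) auto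
    finally show ?thesis by simp
  qed
  then have "2 * exp (1/4) * (\<Sum>k<Suc D. exp (-1/4::real) ^ k) \<le> 2 * (21/16) * 5"
    using exp_quarter_le nn by (intro mult_mono) auto
  finally show ?thesis by simp
qed

definition flip :: "nat \<Rightarrow> (nat \<Rightarrow> real) \<Rightarrow> (nat \<Rightarrow> real)" where
  "flip k x = x(k := - x k)"

lemma flip_flip: "flip k (flip k x) = x"
  unfolding flip_def by auto

lemma flip_cube: "k < d \<Longrightarrow> x \<in> cubeset d \<Longrightarrow> flip k x \<in> cubeset d"
  unfolding cubeset_mem flip_def by auto

lemma flip_bij: "k < d \<Longrightarrow> bij_betw (flip k) (cubeset d) (cubeset d)"
  by (rule bij_betw_byWitness[where f' = "flip k"]) (auto simp: flip_flip flip_cube)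

lemma E_Qd: "measure_pmf.expectation (Qd d) f = (\<Sum>x\<in>cubeset d. f x) / real (card (cubeset d))"
  unfolding Qd_eq by (rule integral_pmf_of_set[OF cubeset_ne finite_cubeset])

lemma E_odd_zero:
  assumes k: "k < d" and odd: "\<And>x. f (flip k x) = - (f x :: real)"
  shows "measure_pmf.expectation (Qd d) f = 0"
proof -
  have "(\<Sum>x\<in>cubeset d. f x) = (\<Sum>x\<in>cubeset d. f (flip k x))"
    by (rule sum.reindex_bij_betw[OF flip_bij[OF k], symmetric])
  also have "\<dots> = - (\<Sum>x\<in>cubeset d. f x)" by (simp add: odd sum_negf)
  finally have "(\<Sum>x\<in>cubeset d. f x) = 0" by simp
  then show ?thesis by (simp add: E_Qd)
qed

definition Jm :: "nat \<Rightarrow> nat \<Rightarrow> real" where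
  "Jm i j = (if (i = 0 \<and> j = 1) \<or> (i = 1 \<and> j = 0) then 1 else 0)"

lemma E_x4:
  assumes d: "2 \<le> d" and i: "i < d" and j: "j < d"
  shows "measure_pmf.expectation (Qd d) (\<lambda>x. x 0 * x 1 * x i * x j) = Jm i j"
proof (cases "(i = 0 \<and> j = 1) \<or> (i = 1 \<and> j = 0)")
  case True
  have "(\<Sum>x\<in>cubeset d. x 0 * x 1 * x i * x j) = (\<Sum>x\<in>cubeset d. 1)"
  proof (rule sum.cong[OF refl])
    fix x assume x: "x \<in> cubeset d"
    have "(x 0)\<^sup>2 = 1" "(x 1)\<^sup>2 = 1" using cube_sq[OF x] d by auto
    then show "x 0 * x 1 * x i * x j = 1" using True by (auto simp: power2_eq_square algebra_simps)
  qed
  then show ?thesis using True finite_cubeset cubeset_ne by (simp add: E_Qd Jm_def)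
next
  case False
  then have J0: "Jm i j = 0" by (simp add: Jm_def)
  show ?thesis
  proof (cases "i = j")
    case True
    define k where "k = (if i = 0 then 1 else (0::nat))"
    have "k < d" using d by (simp add: k_def)
    moreover have "\<And>x. (\<lambda>x. x 0 * x 1 * x i * x j) (flip k x) = - (\<lambda>x. x 0 * x 1 * x i * x j) x"
      using True by (auto simp: flip_def k_def)
    ultimately show ?thesis using J0 by (simp add: E_odd_zero)
  next
    case ij: False
    show ?thesis
    proof (cases "i \<noteq> 0 \<and> i \<noteq> 1")
      case True
      have "\<And>x. (\<lambda>x. x 0 * x 1 * x i * x j) (flip i x) = - (\<lambda>x. x 0 * x 1 * x i * x j) x"
        using True ij by (auto simp: flip_def)
      then show ?thesis using J0 i by (simp add: E_odd_zero)
    next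
      case False
      then have "j \<noteq> 0 \<and> j \<noteq> 1" using ij \<open>\<not> ((i = 0 \<and> j = 1) \<or> (i = 1 \<and> j = 0))\<close> by auto
      then have "\<And>x. (\<lambda>x. x 0 * x 1 * x i * x j) (flip j x) = - (\<lambda>x. x 0 * x 1 * x i * x j) x"
        using ij by (auto simp: flip_def)
      then show ?thesis using J0 j by (simp add: E_odd_zero)
    qed
  qed
qed

definition Zw :: "nat \<Rightarrow> (nat \<Rightarrow> real) \<Rightarrow> (nat \<Rightarrow> real) \<Rightarrow> real" where
  "Zw d w x = x 0 * x 1 * (dot d w x)\<^sup>2"

lemma Zw_expand: "Zw d w x = (\<Sum>i<d. \<Sum>j<d. w i * w j * (x 0 * x 1 * x i * x j))"
proof -
  have "(dot d w x)\<^sup>2 = (\<Sum>i<d. \<Sum>j<d. (w i * x i) * (w j * x j))"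
    unfolding dot_def power2_eq_square by (rule sum_product)
  then show ?thesis unfolding Zw_def
    by (simp add: sum_distrib_left mult_ac)
qed

lemma quadform_expand: "quadform d A w = (\<Sum>i<d. \<Sum>j<d. w i * w j * A i j)"
  unfolding quadform_def matvec_def by (simp add: sum_distrib_left mult_ac)

lemma E_Zw:
  assumes d: "2 \<le> d"
  shows "measure_pmf.expectation (Qd d) (Zw d w) = quadform d Jm w"
proof -
  have "measure_pmf.expectation (Qd d) (Zw d w)
      = measure_pmf.expectation (Qd d) (\<lambda>x. \<Sum>i<d. \<Sum>j<d. w i * w j * (x 0 * x 1 * x i * x j))"
    by (rule arg_cong[where f = "measure_pmf.expectation (Qd d)"]) (rule ext, rule Zw_expand)
  also have "\<dots> = (\<Sum>i<d. \<Sum>j<d. w i * w j * measure_pmf.expectation (Qd d) (\<lambda>x. x 0 * x 1 * x i * x j))"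
    by (subst Bochner_Integration.integral_sum, simp, intro sum.cong refl,
        subst Bochner_Integration.integral_sum, simp, intro sum.cong refl, simp)
  also have "\<dots> = (\<Sum>i<d. \<Sum>j<d. w i * w j * Jm i j)"
    using d by (intro sum.cong refl) (simp only: E_x4 lessThan_iff)
  also have "\<dots> = quadform d Jm w" by (simp add: quadform_expand)
  finally show ?thesis .
qed

lemma matvec_Jm:
  assumes d: "2 \<le> d"
  shows "matvec d Jm v i = (if i = 0 then v 1 else 0) + (if i = 1 then v 0 else 0)"
proof -
  have "matvec d Jm v i = (\<Sum>j<d. (if i = 0 \<and> j = 1 then v j else 0) + (if i = 1 \<and> j = 0 then v j else 0))"
    unfolding matvec_def Jm_def by (intro sum.cong refl) auto
  also have "\<dots> = (if i = 0 then v 1 else 0) + (if i = 1 then v 0 else 0)"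
    using d by (simp add: sum.distrib)
  finally show ?thesis .
qed

lemma quadform_Jm:
  assumes d: "2 \<le> d"
  shows "quadform d Jm w = 2 * w 0 * w 1"
proof -
  have "quadform d Jm w = (\<Sum>i<d. (if i = 0 then w 0 * w 1 else 0) + (if i = 1 then w 1 * w 0 else 0))"
    unfolding quadform_def matvec_Jm[OF d] by (intro sum.cong refl) auto
  also have "\<dots> = 2 * w 0 * w 1" using d by (simp add: sum.distrib)
  finally show ?thesis .
qed

lemma sum01_le:
  fixes w :: "nat \<Rightarrow> real" and d :: nat
  assumes d: "2 \<le> d"
  shows "(w 0)\<^sup>2 + (w 1)\<^sup>2 \<le> (\<Sum>i<d. (w i :: real)\<^sup>2)"
proof -
  have "(\<Sum>i\<in>{0,1::nat}. (w i)\<^sup>2) \<le> (\<Sum>i<d. (w i)\<^sup>2)"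
    using d by (intro sum_mono2) auto
  then show ?thesis by simp
qed

lemma abs_quadform_Jm:
  assumes d: "2 \<le> d" and w: "(\<Sum>i<d. (w i)\<^sup>2) \<le> 1"
  shows "\<bar>quadform d Jm w\<bar> \<le> 1"
proof -
  have "\<bar>2 * w 0 * w 1\<bar> \<le> (w 0)\<^sup>2 + (w 1)\<^sup>2"
    using sum_squares_bound[of "w 0" "w 1"] sum_squares_bound[of "w 0" "- w 1"]
    by (auto simp: abs_if algebra_simps)
  then show ?thesis using sum01_le[OF d, of w] w by (simp add: quadform_Jm[OF d])
qed

lemma exp_le_quad: "exp (x::real) \<le> 1 + x + x\<^sup>2 * exp \<bar>x\<bar>"
proof (cases "x < 0")
  case True
  define t where "t = - x"
  have t: "0 < t" using True by (simp add: t_def)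
  have "exp x = inverse (exp t)" by (simp add: t_def exp_minus)
  also have "\<dots> \<le> inverse (1 + t)"
    using t by (intro le_imp_inverse_le) auto
  also have "\<dots> \<le> 1 - t + t\<^sup>2"
  proof -
    have "1 \<le> (1 + t) * (1 - t + t\<^sup>2)" using t by (simp add: algebra_simps power2_eq_square power3_eq_cube)
    then show ?thesis using t by (simp add: field_simps)
  qed
  also have "\<dots> \<le> 1 + x + x\<^sup>2 * exp \<bar>x\<bar>"
    using t by (simp add: t_def)
  finally show ?thesis .
next
  case False
  show ?thesis
  proof (cases "x \<le> 1")
    case True
    have "exp x \<le> 1 + x + x\<^sup>2" using exp_bound False True by simp
    also have "x\<^sup>2 \<le> x\<^sup>2 * exp \<bar>x\<bar>"
    proof -
      have "x\<^sup>2 * 1 \<le> x\<^sup>2 * exp \<bar>x\<bar>" by (rule mult_left_mono) simp_all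
      then show ?thesis by simp
    qed
    finally show ?thesis by simp
  next
    case x1: False
    have "1 \<le> x\<^sup>2" using x1 by (intro one_le_power) simp
    then have "1 * exp x \<le> x\<^sup>2 * exp x" by (rule mult_right_mono) simp
    then have "exp x \<le> x\<^sup>2 * exp \<bar>x\<bar>" using x1 by simp
    then show ?thesis using x1 by linarith
  qed
qed

lemma sq_le_exp: "0 \<le> (a::real) \<Longrightarrow> a\<^sup>2 \<le> 256 * exp (a/8)"
proof -
  assume a: "0 \<le> a"
  have "a/16 \<le> exp (a/16)" using exp_ge_add_one_self[of "a/16"] by linarith
  then have "(a/16)\<^sup>2 \<le> (exp (a/16))\<^sup>2" using a by (intro power_mono) auto
  also have "(exp (a/16))\<^sup>2 = exp (a/8)" by (simp add: power2_eq_square exp_add[symmetric])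
  finally show ?thesis by (simp add: power_divide)
qed

lemma mgf_W:
  fixes d :: nat and w :: "nat \<Rightarrow> real" and l :: real
  assumes d: "2 \<le> d" and w: "(\<Sum>i<d. (w i)\<^sup>2) \<le> 1" and l: "\<bar>l\<bar> \<le> 1/8"
  shows "measure_pmf.expectation (Qd d) (\<lambda>x. exp (l * (Zw d w x - quadform d Jm w))) \<le> exp (4800 * l\<^sup>2)"
proof -
  define \<mu> where "\<mu> = quadform d Jm w"
  define W where "W = (\<lambda>x. Zw d w x - \<mu>)"
  have mu: "\<bar>\<mu>\<bar> \<le> 1" unfolding \<mu>_def by (rule abs_quadform_Jm[OF d w])
  have EW: "measure_pmf.expectation (Qd d) W = 0"
    unfolding W_def using E_Zw[OF d, of w] by (simp add: \<mu>_def)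
  have Wb: "\<bar>W x\<bar> \<le> (dot d w x)\<^sup>2 + 1" if x: "x \<in> cubeset d" for x
  proof -
    have "\<bar>x 0\<bar> = 1" "\<bar>x 1\<bar> = 1" using cube_abs[OF x] d by auto
    then have "\<bar>Zw d w x\<bar> = (dot d w x)\<^sup>2" by (simp add: Zw_def abs_mult)
    then show ?thesis unfolding W_def using mu by linarith
  qed
  define c where "c = 256 * exp (1/4::real)"
  have pw: "exp (l * W x) \<le> 1 + l * W x + c * l\<^sup>2 * exp ((dot d w x)\<^sup>2 / 4)"
    if x: "x \<in> cubeset d" for x
  proof -
    define a where "a = \<bar>W x\<bar>"
    have a0: "0 \<le> a" by (simp add: a_def)
    have "\<bar>l * W x\<bar> \<le> a / 8" unfolding a_def abs_mult using l
      by (metis abs_ge_zero mult.commute mult_left_mono times_divide_eq_right mult_1_right)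
    then have e1: "exp \<bar>l * W x\<bar> \<le> exp (a/8)" by simp
    have "(l * W x)\<^sup>2 * exp \<bar>l * W x\<bar> = l\<^sup>2 * (a\<^sup>2 * exp \<bar>l * W x\<bar>)"
      by (simp add: a_def power_mult_distrib)
    also have "\<dots> \<le> l\<^sup>2 * (a\<^sup>2 * exp (a/8))"
      using e1 by (intro mult_left_mono) auto
    also have "\<dots> \<le> l\<^sup>2 * ((256 * exp (a/8)) * exp (a/8))"
      using sq_le_exp[OF a0] by (intro mult_left_mono mult_right_mono) auto
    also have "\<dots> = l\<^sup>2 * (256 * exp (a/4))"
      by (simp add: exp_add[symmetric])
    also have "\<dots> \<le> l\<^sup>2 * (256 * exp (((dot d w x)\<^sup>2 + 1)/4))"
      using Wb[OF x] by (intro mult_left_mono) (auto simp: a_def divide_right_mono)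
    also have "\<dots> = c * l\<^sup>2 * exp ((dot d w x)\<^sup>2 / 4)"
      by (simp add: c_def exp_add[symmetric] add_divide_distrib mult_ac)
    finally have "(l * W x)\<^sup>2 * exp \<bar>l * W x\<bar> \<le> c * l\<^sup>2 * exp ((dot d w x)\<^sup>2 / 4)" .
    then show ?thesis using exp_le_quad[of "l * W x"] by linarith
  qed
  have "measure_pmf.expectation (Qd d) (\<lambda>x. exp (l * W x))
      \<le> measure_pmf.expectation (Qd d) (\<lambda>x. 1 + l * W x + c * l\<^sup>2 * exp ((dot d w x)\<^sup>2 / 4))"
    by (intro integral_mono_AE integrable_Qd AE_pmfI pw) (simp add: set_pmf_Qd)
  also have "\<dots> = 1 + l * measure_pmf.expectation (Qd d) W
                   + c * l\<^sup>2 * measure_pmf.expectation (Qd d) (\<lambda>x. exp ((dot d w x)\<^sup>2 / 4))"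
    by (simp add: Bochner_Integration.integral_add)
  also have "\<dots> \<le> 1 + c * l\<^sup>2 * 14"
  proof -
    have "c * l\<^sup>2 * measure_pmf.expectation (Qd d) (\<lambda>x. exp ((dot d w x)\<^sup>2 / 4)) \<le> c * l\<^sup>2 * 14"
      using mgf_sq[OF w] by (intro mult_left_mono) (auto simp: c_def)
    then show ?thesis by (simp add: EW)
  qed
  also have "\<dots> \<le> 1 + 4704 * l\<^sup>2"
  proof -
    have "c * 14 \<le> 4704" using exp_quarter_le by (simp add: c_def)
    then have "(c * 14) * l\<^sup>2 \<le> 4704 * l\<^sup>2" by (intro mult_right_mono) auto
    then show ?thesis by (simp add: mult_ac)
  qed
  also have "\<dots> \<le> exp (4704 * l\<^sup>2)" by (rule exp_ge_add_one_self)
  also have "\<dots> \<le> exp (4800 * l\<^sup>2)" by simp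
  finally show ?thesis by (simp add: W_def \<mu>_def)
qed

lemma samples_eq: "samples N d = PiE_dflt {..<N} (\<lambda>_. 0) (\<lambda>_. cubeset d)"
proof (intro set_eqI iffI)
  fix X assume X: "X \<in> samples N d"
  show "X \<in> PiE_dflt {..<N} (\<lambda>_. 0) (\<lambda>_. cubeset d)"
    unfolding PiE_dflt_def
  proof (intro CollectI allI conjI impI)
    fix s assume "s \<in> {..<N}"
    then show "X s \<in> cubeset d" using X unfolding samples_def cubeset_mem by auto
  next
    fix s assume "s \<notin> {..<N}"
    then show "X s = (\<lambda>_. 0)" using X unfolding samples_def by (auto simp: fun_eq_iff)
  qed
next
  fix X assume X: "X \<in> PiE_dflt {..<N} (\<lambda>_. 0) (\<lambda>_. cubeset d)"
  then have a: "\<And>s. s < N \<Longrightarrow> X s \<in> cubeset d" and b: "\<And>s. \<not> s < N \<Longrightarrow> X s = (\<lambda>_. 0)"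
    unfolding PiE_dflt_def by auto
  show "X \<in> samples N d" unfolding samples_def
  proof (intro CollectI conjI allI impI)
    fix s i assume "s < N" "i < d"
    then show "X s i \<in> {-1, 1}" using a[of s] unfolding cubeset_mem by auto
  next
    fix s i assume "N \<le> s \<or> d \<le> i"
    then show "X s i = 0"
    proof
      assume "N \<le> s" then show ?thesis using b[of s] by auto
    next
      assume di: "d \<le> i"
      show ?thesis
      proof (cases "s < N")
        case True then show ?thesis using a[of s] di unfolding cubeset_mem by auto
      next
        case False then show ?thesis using b[of s] by auto
      qed
    qed
  qed
qed

lemma P_eq: "pmf_of_set (samples N d) = Pi_pmf {..<N} (\<lambda>_. 0) (\<lambda>_. Qd d)"
  unfolding samples_eq Qd_eq
  by (rule Pi_pmf_of_set[symmetric]) (auto simp: finite_cubeset cubeset_ne)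

lemma finite_set_Pi_pmf:
  fixes N :: nat
  assumes "finite (set_pmf p)"
  shows "finite (set_pmf (Pi_pmf {..<N} dflt (\<lambda>_. p)))"
  by (subst set_Pi_pmf) (auto intro!: finite_PiE_dflt assms)

lemma chernoff:
  fixes p :: "'a pmf" and f :: "'a \<Rightarrow> real" and N :: nat and K \<tau> :: real
  assumes fin: "finite (set_pmf p)" and K: "0 < K" and tau: "0 \<le> \<tau>"
    and mgf: "\<And>l. 0 \<le> l \<Longrightarrow> l \<le> 1/8 \<Longrightarrow> measure_pmf.expectation p (\<lambda>x. exp (l * f x)) \<le> exp (K * l\<^sup>2)"
  shows "measure_pmf.prob (Pi_pmf {..<N} dflt (\<lambda>_. p)) {X. real N * \<tau> \<le> (\<Sum>s<N. f (X s))}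
           \<le> exp (- real N * min (\<tau>\<^sup>2/(4*K)) (\<tau>/16))"
proof -
  define P where "P = Pi_pmf {..<N} dflt (\<lambda>_. p)"
  define l where "l = min (1/8) (\<tau>/(2*K))"
  have l0: "0 \<le> l" using tau K by (simp add: l_def)
  have l1: "l \<le> 1/8" by (simp add: l_def)
  have finP: "finite (set_pmf P)" unfolding P_def by (rule finite_set_Pi_pmf[OF fin])
  have "measure_pmf.prob P {X. real N * \<tau> \<le> (\<Sum>s<N. f (X s))}
      \<le> measure_pmf.expectation P (\<lambda>X. exp (l * ((\<Sum>s<N. f (X s)) - real N * \<tau>)))"
    by (rule prob_le_indicator_int[OF finP l0])
  also have "(\<lambda>X. exp (l * ((\<Sum>s<N. f (X s)) - real N * \<tau>)))
           = (\<lambda>X. exp (- l * real N * \<tau>) * (\<Prod>s<N. exp (l * f (X s))))"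
  proof
    fix X
    have "exp (l * ((\<Sum>s<N. f (X s)) - real N * \<tau>)) = exp (- l * real N * \<tau> + (\<Sum>s<N. l * f (X s)))"
      by (simp add: algebra_simps sum_distrib_left)
    also have "\<dots> = exp (- l * real N * \<tau>) * (\<Prod>s<N. exp (l * f (X s)))"
      by (simp only: exp_add exp_sum finite_lessThan)
    finally show "exp (l * ((\<Sum>s<N. f (X s)) - real N * \<tau>)) = exp (- l * real N * \<tau>) * (\<Prod>s<N. exp (l * f (X s)))" .
  qed
  also have "measure_pmf.expectation P (\<lambda>X. exp (- l * real N * \<tau>) * (\<Prod>s<N. exp (l * f (X s))))
      = exp (- l * real N * \<tau>) * measure_pmf.expectation P (\<lambda>X. \<Prod>s<N. exp (l * f (X s)))"
    by simp
  also have "measure_pmf.expectation P (\<lambda>X. \<Prod>s<N. exp (l * f (X s)))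
      = (\<Prod>s<N. measure_pmf.expectation p (\<lambda>x. exp (l * f x)))"
    unfolding P_def
    by (rule expectation_prod_Pi_pmf[where f = "\<lambda>_ x. exp (l * f x)"]) (auto intro: integrable_measure_pmf_finite[OF fin])
  also have "(\<Prod>s<N. measure_pmf.expectation p (\<lambda>x. exp (l * f x))) \<le> (\<Prod>s<N. exp (K * l\<^sup>2))"
    by (intro prod_mono conjI mgf l0 l1 Bochner_Integration.integral_nonneg) auto
  also have "(\<Prod>s<N. exp (K * l\<^sup>2)) = exp (real N * (K * l\<^sup>2))"
    by (simp add: exp_of_nat_mult)
  also have "exp (- l * real N * \<tau>) * exp (real N * (K * l\<^sup>2)) = exp (real N * (K * l\<^sup>2 - l * \<tau>))"
    by (simp add: exp_add[symmetric] algebra_simps)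
  also have "\<dots> \<le> exp (- real N * min (\<tau>\<^sup>2/(4*K)) (\<tau>/16))"
  proof -
    have key: "K * l\<^sup>2 - l * \<tau> \<le> - min (\<tau>\<^sup>2/(4*K)) (\<tau>/16)"
    proof (cases "\<tau>/(2*K) \<le> 1/8")
      case True
      then have ll: "l = \<tau>/(2*K)" by (simp add: l_def)
      have "K * l\<^sup>2 - l * \<tau> = - (\<tau>\<^sup>2/(4*K))"
        unfolding ll using K by (simp add: field_simps power2_eq_square)
      then show ?thesis by linarith
    next
      case False
      then have ll: "l = 1/8" by (simp add: l_def)
      have "K \<le> 4 * \<tau>" using False K by (simp add: field_simps)
      then have "K * l\<^sup>2 - l * \<tau> \<le> - (\<tau>/16)" unfolding ll by (simp add: power2_eq_square)
      then show ?thesis by linarith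
    qed
    have "real N * (K * l\<^sup>2 - l * \<tau>) \<le> real N * (- min (\<tau>\<^sup>2/(4*K)) (\<tau>/16))"
      by (rule mult_left_mono[OF key]) simp
    then show ?thesis by simp
  qed
  finally show ?thesis
    using l0 by (simp add: P_def mult_left_mono)
qed

definition ns :: "nat \<Rightarrow> (nat \<Rightarrow> real) \<Rightarrow> real" where
  "ns d v = (\<Sum>i<d. (v i)\<^sup>2)"

lemma vnorm_ns: "vnorm d v = sqrt (ns d v)"
  by (simp add: vnorm_def ns_def)

lemma ns_nonneg [simp]: "0 \<le> ns d v"
  by (simp add: ns_def sum_nonneg)

lemma ns_scale: "ns d (\<lambda>i. c * v i) = c\<^sup>2 * ns d v"
  by (simp add: ns_def power_mult_distrib sum_distrib_left)

lemma ns_paral: "ns d (\<lambda>i. a i + b i) + ns d (\<lambda>i. a i - b i) = 2 * ns d a + 2 * ns d b"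
  by (simp add: ns_def sum.distrib[symmetric] sum_distrib_left power2_eq_square algebra_simps)

lemma ns_add_le: "ns d (\<lambda>i. a i + b i) \<le> 2 * ns d a + 2 * ns d b"
  using ns_paral[of d a b] ns_nonneg[of d "\<lambda>i. a i - b i"] by linarith

definition bil :: "nat \<Rightarrow> (nat \<Rightarrow> nat \<Rightarrow> real) \<Rightarrow> (nat \<Rightarrow> real) \<Rightarrow> (nat \<Rightarrow> real) \<Rightarrow> real" where
  "bil d A a b = (\<Sum>i<d. a i * matvec d A b i)"

definition symm :: "nat \<Rightarrow> (nat \<Rightarrow> nat \<Rightarrow> real) \<Rightarrow> bool" where
  "symm d A \<longleftrightarrow> (\<forall>i<d. \<forall>j<d. A i j = A j i)"

lemma bil_expand: "bil d A a b = (\<Sum>i<d. \<Sum>j<d. a i * A i j * b j)"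
  unfolding bil_def matvec_def by (simp add: sum_distrib_left mult_ac)

lemma quad_bil: "quadform d A v = bil d A v v"
  unfolding quadform_def bil_def ..

lemma bil_sym:
  assumes "symm d A"
  shows "bil d A a b = bil d A b a"
proof -
  have "bil d A a b = (\<Sum>j<d. \<Sum>i<d. a i * A i j * b j)"
    unfolding bil_expand by (rule sum.swap)
  also have "\<dots> = bil d A b a"
    unfolding bil_expand using assms by (intro sum.cong refl) (auto simp: symm_def mult_ac)
  finally show ?thesis .
qed

lemma bil_add_left: "bil d A (\<lambda>i. a i + b i) e = bil d A a e + bil d A b e"
  by (simp add: bil_def sum.distrib algebra_simps)
lemma bil_diff_left: "bil d A (\<lambda>i. a i - b i) e = bil d A a e - bil d A b e"
  by (simp add: bil_def sum_subtractf algebra_simps)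
lemma bil_scale_left: "bil d A (\<lambda>i. c * a i) e = c * bil d A a e"
  by (simp add: bil_def sum_distrib_left algebra_simps)
lemma bil_add_right: "bil d A e (\<lambda>i. a i + b i) = bil d A e a + bil d A e b"
  by (simp add: bil_expand sum.distrib algebra_simps)
lemma bil_diff_right: "bil d A e (\<lambda>i. a i - b i) = bil d A e a - bil d A e b"
  by (simp add: bil_expand sum_subtractf algebra_simps)
lemma bil_scale_right: "bil d A e (\<lambda>i. c * a i) = c * bil d A e a"
  by (simp add: bil_expand sum_distrib_left algebra_simps)

lemma polar:
  assumes "symm d A"
  shows "quadform d A (\<lambda>i. a i + b i) - quadform d A (\<lambda>i. a i - b i) = 4 * bil d A a b"
  unfolding quad_bil bil_add_left bil_add_right bil_diff_left bil_diff_right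
  using bil_sym[OF assms, of b a] by simp

lemma quad_diff:
  assumes "symm d A"
  shows "quadform d A v - quadform d A w = bil d A (\<lambda>i. v i - w i) (\<lambda>i. v i + w i)"
  unfolding quad_bil bil_add_left bil_add_right bil_diff_left bil_diff_right
  using bil_sym[OF assms, of v w] by simp

lemma quad_scale: "quadform d A (\<lambda>i. c * v i) = c\<^sup>2 * quadform d A v"
  unfolding quad_bil bil_scale_left bil_scale_right by (simp add: power2_eq_square)

lemma ns_zero_quad: "ns d v = 0 \<Longrightarrow> quadform d A v = 0"
proof -
  assume "ns d v = 0"
  then have "\<forall>i\<in>{..<d}. (v i)\<^sup>2 = 0" unfolding ns_def by (subst sum_nonneg_eq_0_iff[symmetric]) auto
  then have "\<And>i. i < d \<Longrightarrow> v i = 0" by auto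
  then show ?thesis unfolding quad_bil bil_expand by simp
qed

lemma bil_bound:
  assumes S: "symm d A" and q: "\<And>u. \<bar>quadform d A u\<bar> \<le> q * ns d u"
  shows "\<bar>bil d A a b\<bar> \<le> q * (ns d a + ns d b) / 2"
proof -
  have "\<bar>4 * bil d A a b\<bar> \<le> \<bar>quadform d A (\<lambda>i. a i + b i)\<bar> + \<bar>quadform d A (\<lambda>i. a i - b i)\<bar>"
    unfolding polar[OF S, symmetric] by (rule abs_triangle_ineq4)
  also have "\<dots> \<le> q * ns d (\<lambda>i. a i + b i) + q * ns d (\<lambda>i. a i - b i)"
    by (intro add_mono q)
  also have "\<dots> = q * (2 * ns d a + 2 * ns d b)"
    unfolding ns_paral[symmetric] by (simp add: algebra_simps)
  also have "\<dots> = 2 * (q * (ns d a + ns d b))" by (simp add: algebra_simps)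
  finally have X: "\<bar>4 * bil d A a b\<bar> \<le> 2 * (q * (ns d a + ns d b))" .
  have "\<bar>4 * bil d A a b\<bar> = 4 * \<bar>bil d A a b\<bar>" by (simp add: abs_mult)
  then show ?thesis using X by linarith
qed

lemma quad_from_ball:
  assumes q: "\<And>v. ns d v \<le> 1 \<Longrightarrow> \<bar>quadform d A v\<bar> \<le> q"
  shows "\<bar>quadform d A u\<bar> \<le> q * ns d u"
proof (cases "ns d u = 0")
  case True
  then show ?thesis using ns_zero_quad[OF True] q[of "\<lambda>_. 0"] by (simp add: ns_def)
next
  case False
  then have pos: "0 < ns d u" using ns_nonneg[of d u] by linarith
  define c where "c = 1 / sqrt (ns d u)"
  have c2: "c\<^sup>2 = 1 / ns d u" using pos by (simp add: c_def power_divide)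
  have "ns d (\<lambda>i. c * u i) = 1" using pos by (simp add: ns_scale c2)
  then have "\<bar>quadform d A (\<lambda>i. c * u i)\<bar> \<le> q" by (intro q) simp
  then have "\<bar>quadform d A u\<bar> / ns d u \<le> q" by (simp add: quad_scale c2 abs_mult)
  then show ?thesis using pos by (simp add: field_simps)
qed

definition grid :: "nat \<Rightarrow> real set" where
  "grid d = (\<lambda>k::int. real_of_int k / real (16*d)) ` {- int (16*d)..int (16*d)}"

definition net :: "nat \<Rightarrow> (nat \<Rightarrow> real) set" where
  "net d = {w. (\<forall>i<d. w i \<in> grid d) \<and> (\<forall>i. d \<le> i \<longrightarrow> w i = 0) \<and> ns d w \<le> 1}"

lemma net_sub: "net d \<subseteq> PiE_dflt {..<d} 0 (\<lambda>_. grid d)"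
  unfolding net_def PiE_dflt_def by auto

lemma finite_grid: "finite (grid d)"
  unfolding grid_def by simp

lemma finite_net: "finite (net d)"
  by (rule finite_subset[OF net_sub]) (auto intro!: finite_PiE_dflt finite_grid)

lemma card_grid: "card (grid d) \<le> 32 * d + 1"
proof -
  have "card (grid d) \<le> card {- int (16*d)..int (16*d)}"
    unfolding grid_def by (rule card_image_le) simp
  also have "\<dots> = 32 * d + 1" by simp
  finally show ?thesis .
qed

lemma card_net: "card (net d) \<le> (32 * d + 1) ^ d"
proof -
  have "card (net d) \<le> card (PiE_dflt {..<d} (0::real) (\<lambda>_. grid d))"
    by (rule card_mono[OF _ net_sub]) (auto intro!: finite_PiE_dflt finite_grid)
  also have "\<dots> = (\<Prod>i<d. card (grid d))"
    by (rule card_PiE_dflt) (auto intro: finite_grid)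
  also have "\<dots> = card (grid d) ^ d" by simp
  also have "\<dots> \<le> (32 * d + 1) ^ d" by (rule power_mono[OF card_grid]) simp
  finally show ?thesis .
qed

lemma zero_in_net: "(\<lambda>_. 0) \<in> net d"
proof -
  have "(0::real) \<in> grid d" unfolding grid_def by (rule image_eqI[of _ _ 0]) auto
  then show ?thesis unfolding net_def by (simp add: ns_def)
qed

lemma round_pos:
  fixes z m :: real
  assumes m: "0 < m" and z0: "0 \<le> z" and zm: "z \<le> m"
  shows "\<bar>real_of_int \<lfloor>z\<rfloor> / m\<bar> \<le> \<bar>z / m\<bar>" "\<bar>z / m - real_of_int \<lfloor>z\<rfloor> / m\<bar> \<le> 1 / m" "\<bar>real_of_int \<lfloor>z\<rfloor>\<bar> \<le> m"
proof -
  define fz where "fz = real_of_int \<lfloor>z\<rfloor>"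
  have f1: "fz \<le> z" "z < fz + 1" unfolding fz_def by linarith+
  have f0: "0 \<le> fz" using z0 unfolding fz_def by simp
  show "\<bar>real_of_int \<lfloor>z\<rfloor> / m\<bar> \<le> \<bar>z / m\<bar>" unfolding fz_def[symmetric]
    using f0 f1 m z0 by (simp add: abs_of_nonneg divide_right_mono)
  have e: "z / m - fz / m = (z - fz) / m" by (simp add: diff_divide_distrib)
  have "\<bar>(z - fz) / m\<bar> = (z - fz) / m" using f1 m by (simp add: abs_of_nonneg)
  also have "\<dots> \<le> 1 / m" using f1 m by (intro divide_right_mono) auto
  finally show "\<bar>z / m - real_of_int \<lfloor>z\<rfloor> / m\<bar> \<le> 1 / m" unfolding fz_def[symmetric] e .
  show "\<bar>real_of_int \<lfloor>z\<rfloor>\<bar> \<le> m" unfolding fz_def[symmetric] using f0 f1 zm by simp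
qed

lemma round_coord:
  fixes y :: real and m :: real
  assumes m: "0 < m" and y: "\<bar>y\<bar> \<le> 1"
  defines "k \<equiv> (if 0 \<le> y then \<lfloor>y * m\<rfloor> else - \<lfloor>- y * m\<rfloor>)"
  shows "\<bar>real_of_int k / m\<bar> \<le> \<bar>y\<bar> \<and> \<bar>y - real_of_int k / m\<bar> \<le> 1 / m \<and> \<bar>real_of_int k\<bar> \<le> m"
proof (cases "0 \<le> y")
  case True
  define z where "z = y * m"
  have z0: "0 \<le> z" using True m by (simp add: z_def)
  have zm: "z \<le> m" using y m True by (simp add: z_def)
  have kk: "k = \<lfloor>z\<rfloor>" using True by (simp add: k_def z_def)
  have yz: "y = z / m" using m by (simp add: z_def)
  show ?thesis unfolding kk yz using round_pos[OF m z0 zm] by simp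
next
  case False
  define z where "z = - y * m"
  have z0: "0 \<le> z" using False m unfolding z_def by (intro mult_nonneg_nonneg) auto
  have "(- y) * m \<le> 1 * m" using y m False by (intro mult_right_mono) auto
  then have zm: "z \<le> m" by (simp add: z_def)
  have kk: "k = - \<lfloor>z\<rfloor>" using False by (simp add: k_def z_def)
  have yz: "y = - (z / m)" using m by (simp add: z_def)
  have e: "- (z / m) - real_of_int (- \<lfloor>z\<rfloor>) / m = - (z / m - real_of_int \<lfloor>z\<rfloor> / m)" by simp
  show ?thesis unfolding kk yz e abs_minus_cancel using round_pos[OF m z0 zm] by simp
qed

lemma rounding:
  assumes d: "1 \<le> d" and v: "ns d v \<le> 1"
  shows "\<exists>w\<in>net d. ns d (\<lambda>i. v i - w i) \<le> 1/256"
proof -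
  define m where "m = real (16 * d)"
  have m: "0 < m" using d by (simp add: m_def)
  define k where "k = (\<lambda>i. if 0 \<le> v i then \<lfloor>v i * m\<rfloor> else - \<lfloor>- v i * m\<rfloor>)"
  define w where "w = (\<lambda>i. if i < d then real_of_int (k i) / m else 0)"
  have vi: "\<bar>v i\<bar> \<le> 1" if "i < d" for i
    using abs_le_one_of_sumsq[where w=v and d=d and i=i] v that by (simp add: ns_def)
  have R: "\<bar>w i\<bar> \<le> \<bar>v i\<bar> \<and> \<bar>v i - w i\<bar> \<le> 1 / m \<and> \<bar>real_of_int (k i)\<bar> \<le> m" if "i < d" for i
    using round_coord[OF m vi[OF that]] that unfolding w_def k_def by simp
  have wn: "ns d w \<le> 1"
  proof -
    have "ns d w \<le> ns d v" unfolding ns_def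
    proof (rule sum_mono)
      fix i assume "i \<in> {..<d}"
      then have "\<bar>w i\<bar> \<le> \<bar>v i\<bar>" using R by auto
      then show "(w i)\<^sup>2 \<le> (v i)\<^sup>2" by (simp add: abs_le_square_iff)
    qed
    then show ?thesis using v by simp
  qed
  have wg: "w i \<in> grid d" if "i < d" for i
  proof -
    have "\<bar>real_of_int (k i)\<bar> \<le> m" using R[OF that] by simp
    then have "\<bar>k i\<bar> \<le> int (16 * d)" unfolding m_def by linarith
    then have "k i \<in> {- int (16*d)..int (16*d)}" by auto
    then show ?thesis unfolding grid_def w_def using that by (auto simp: m_def)
  qed
  have wnet: "w \<in> net d" unfolding net_def using wn wg by (auto simp: w_def)
  have "ns d (\<lambda>i. v i - w i) \<le> (\<Sum>i<d. (1/m)\<^sup>2)" unfolding ns_def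
  proof (rule sum_mono)
    fix i assume "i \<in> {..<d}"
    then have "\<bar>v i - w i\<bar> \<le> 1/m" using R by auto
    then have "\<bar>v i - w i\<bar>\<^sup>2 \<le> (1/m)\<^sup>2" by (intro power_mono) auto
    then show "(v i - w i)\<^sup>2 \<le> (1/m)\<^sup>2" by simp
  qed
  also have "\<dots> = real d / (256 * (real d)\<^sup>2)" by (simp add: m_def power2_eq_square)
  also have "\<dots> \<le> 1/256" using d by (simp add: field_simps power2_eq_square)
  finally show ?thesis using wnet by blast
qed

lemma quad_le_R:
  assumes v: "ns d v \<le> 1"
  shows "\<bar>quadform d A v\<bar> \<le> (\<Sum>i<d. \<Sum>j<d. \<bar>A i j\<bar>)"
proof -
  have vi: "\<bar>v i\<bar> \<le> 1" if "i < d" for i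
    using abs_le_one_of_sumsq[where w=v and d=d and i=i] v that by (simp add: ns_def)
  have "\<bar>quadform d A v\<bar> \<le> (\<Sum>i<d. \<bar>\<Sum>j<d. v i * A i j * v j\<bar>)"
    unfolding quad_bil bil_expand by (rule sum_abs)
  also have "\<dots> \<le> (\<Sum>i<d. \<Sum>j<d. \<bar>v i * A i j * v j\<bar>)"
    by (intro sum_mono sum_abs)
  also have "\<dots> \<le> (\<Sum>i<d. \<Sum>j<d. \<bar>A i j\<bar>)"
  proof (intro sum_mono)
    fix i j assume "i \<in> {..<d}" "j \<in> {..<d}"
    then have "\<bar>v i\<bar> \<le> 1" "\<bar>v j\<bar> \<le> 1" using vi by auto
    then have "\<bar>v i\<bar> * \<bar>A i j\<bar> * \<bar>v j\<bar> \<le> 1 * \<bar>A i j\<bar> * 1"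
      by (intro mult_mono) auto
    then show "\<bar>v i * A i j * v j\<bar> \<le> \<bar>A i j\<bar>" by (simp add: abs_mult)
  qed
  finally show ?thesis .
qed

lemma net_quad:
  assumes S: "symm d A" and d: "1 \<le> d"
    and H: "\<And>w. w \<in> net d \<Longrightarrow> \<bar>quadform d A w\<bar> \<le> t"
  shows "\<bar>quadform d A u\<bar> \<le> 2 * t * ns d u"
proof -
  define Q where "Q = {\<bar>quadform d A v\<bar> | v. ns d v \<le> 1}"
  define q where "q = Sup Q"
  have Qne: "Q \<noteq> {}" unfolding Q_def by (auto intro: exI[of _ "\<lambda>_. 0"] simp: ns_def)
  have Qbdd: "bdd_above Q" unfolding Q_def bdd_above_def using quad_le_R by blast
  have inQ: "\<bar>quadform d A v\<bar> \<le> q" if "ns d v \<le> 1" for v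
    unfolding q_def by (rule cSup_upper[OF _ Qbdd]) (use that in \<open>auto simp: Q_def\<close>)
  have qq: "\<bar>quadform d A u\<bar> \<le> q * ns d u" for u
    by (rule quad_from_ball[OF inQ])
  have q0: "0 \<le> q" using inQ[of "\<lambda>_. 0"] by (simp add: ns_def)
  have t0: "0 \<le> t" using H[OF zero_in_net] by simp
  have main: "\<bar>quadform d A v\<bar> \<le> t + 5 * q / 32" if v: "ns d v \<le> 1" for v
  proof -
    obtain w where w: "w \<in> net d" and vw: "ns d (\<lambda>i. v i - w i) \<le> 1/256"
      using rounding[OF d v] by blast
    have wn: "ns d w \<le> 1" using w by (simp add: net_def)
    have "quadform d A v - quadform d A w = bil d A (\<lambda>i. v i - w i) (\<lambda>i. v i + w i)"
      by (rule quad_diff[OF S])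
    also have "\<dots> = bil d A (\<lambda>i. 4 * (v i - w i)) (\<lambda>i. (1/4) * (v i + w i))"
      unfolding bil_scale_left bil_scale_right by simp
    finally have eq: "quadform d A v - quadform d A w = bil d A (\<lambda>i. 4 * (v i - w i)) (\<lambda>i. (1/4) * (v i + w i))" .
    have "\<bar>bil d A (\<lambda>i. 4 * (v i - w i)) (\<lambda>i. (1/4) * (v i + w i))\<bar>
        \<le> q * (ns d (\<lambda>i. 4 * (v i - w i)) + ns d (\<lambda>i. (1/4) * (v i + w i))) / 2"
      by (rule bil_bound[OF S qq])
    also have "ns d (\<lambda>i. 4 * (v i - w i)) + ns d (\<lambda>i. (1/4) * (v i + w i))
             = 16 * ns d (\<lambda>i. v i - w i) + ns d (\<lambda>i. v i + w i) / 16"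
      unfolding ns_scale by (simp add: power2_eq_square)
    also have "\<dots> \<le> 16 * (1/256) + 4 / 16"
      using vw ns_add_le[of d v w] v wn by (intro add_mono divide_right_mono) auto
    finally have "\<bar>quadform d A v - quadform d A w\<bar> \<le> q * (16 * (1/256) + 4 / 16) / 2"
      unfolding eq using q0 by (simp add: mult_left_mono divide_right_mono)
    then have "\<bar>quadform d A v - quadform d A w\<bar> \<le> 5 * q / 32" by simp
    moreover have "\<bar>quadform d A w\<bar> \<le> t" by (rule H[OF w])
    ultimately show ?thesis by linarith
  qed
  have "q \<le> t + 5 * q / 32"
    unfolding q_def by (rule cSup_least[OF Qne]) (use main in \<open>auto simp: Q_def q_def\<close>)
  then have "q \<le> 2 * t" using t0 by linarith
  then have "q * ns d u \<le> 2 * t * ns d u" by (intro mult_right_mono) auto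
  then show ?thesis using qq[of u] by linarith
qed

lemma bil_matvec: "bil d A (matvec d A v) v = ns d (matvec d A v)"
  unfolding bil_def ns_def by (simp add: power2_eq_square)

lemma matvec_bound:
  assumes S: "symm d A" and qq: "\<And>u. \<bar>quadform d A u\<bar> \<le> q * ns d u" and q0: "0 \<le> q"
    and v: "ns d v \<le> 1"
  shows "vnorm d (matvec d A v) \<le> q"
proof -
  define u where "u = matvec d A v"
  define r where "r = ns d u"
  have r0: "0 \<le> r" by (simp add: r_def)
  show ?thesis
  proof (cases "r = 0")
    case True then show ?thesis using q0 by (simp add: vnorm_ns r_def u_def)
  next
    case False
    then have rp: "0 < r" using r0 by simp
    define c where "c = sqrt (1 / sqrt r)"
    have c2: "c\<^sup>2 = 1 / sqrt r" unfolding c_def using rp by simp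
    have cp: "0 < c" unfolding c_def using rp by simp
    have "r = bil d A u v" by (simp add: r_def u_def bil_matvec)
    also have "\<dots> = bil d A (\<lambda>i. c * u i) (\<lambda>i. (1/c) * v i)"
      unfolding bil_scale_left bil_scale_right using cp by simp
    also have "\<dots> \<le> \<bar>bil d A (\<lambda>i. c * u i) (\<lambda>i. (1/c) * v i)\<bar>" by simp
    also have "\<dots> \<le> q * (ns d (\<lambda>i. c * u i) + ns d (\<lambda>i. (1/c) * v i)) / 2"
      by (rule bil_bound[OF S qq])
    also have "ns d (\<lambda>i. c * u i) + ns d (\<lambda>i. (1/c) * v i) = c\<^sup>2 * r + ns d v / c\<^sup>2"
      unfolding ns_scale by (simp add: r_def power_divide)
    also have "c\<^sup>2 * r + ns d v / c\<^sup>2 \<le> sqrt r + sqrt r"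
    proof -
      have a: "c\<^sup>2 * r = sqrt r" unfolding c2 using rp
        by (simp add: field_simps)
      have "ns d v / c\<^sup>2 = ns d v * sqrt r" unfolding c2 by simp
      also have "\<dots> \<le> 1 * sqrt r" using v r0 by (intro mult_right_mono) auto
      finally show ?thesis using a by simp
    qed
    finally have "r \<le> q * (sqrt r + sqrt r) / 2" using q0 by (simp add: mult_left_mono divide_right_mono)
    then have "sqrt r * sqrt r \<le> q * sqrt r" using rp by simp
    then have "sqrt r \<le> q" using rp by (intro mult_right_le_imp_le[of "sqrt r" "sqrt r" q]) auto
    then show ?thesis by (simp add: vnorm_ns r_def u_def)
  qed
qed

definition Am :: "nat \<Rightarrow> (nat \<Rightarrow> nat \<Rightarrow> real) \<Rightarrow> nat \<Rightarrow> nat \<Rightarrow> real" where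
  "Am N X i j = Mhat N X i j - Jm i j"

lemma symm_Am: "symm d (Am N X)"
  unfolding symm_def Am_def Mhat_def Jm_def by (auto simp: mult_ac)

lemma quadform_Mhat:
  "quadform d (Mhat N X) w = (1 / real N) * (\<Sum>s<N. Zw d w (X s))"
proof -
  have "quadform d (Mhat N X) w = (\<Sum>i<d. \<Sum>j<d. w i * w j * Mhat N X i j)"
    by (rule quadform_expand)
  also have "\<dots> = (1 / real N) * (\<Sum>i<d. \<Sum>j<d. \<Sum>s<N. w i * w j * (X s 0 * X s 1 * X s i * X s j))"
    unfolding Mhat_def by (simp add: sum_distrib_left mult_ac)
  also have "(\<Sum>i<d. \<Sum>j<d. \<Sum>s<N. w i * w j * (X s 0 * X s 1 * X s i * X s j))
           = (\<Sum>s<N. \<Sum>i<d. \<Sum>j<d. w i * w j * (X s 0 * X s 1 * X s i * X s j))"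
    by (simp add: sum.swap[of _ "{..<N}"])
  also have "\<dots> = (\<Sum>s<N. Zw d w (X s))"
    by (simp add: Zw_expand)
  finally show ?thesis .
qed

lemma quadform_Am:
  assumes N: "1 \<le> N"
  shows "quadform d (Am N X) w = (1 / real N) * (\<Sum>s<N. Zw d w (X s) - quadform d Jm w)"
proof -
  have "quadform d (Am N X) w = quadform d (Mhat N X) w - quadform d Jm w"
    unfolding quadform_expand Am_def by (simp add: sum_subtractf algebra_simps)
  also have "\<dots> = (1 / real N) * (\<Sum>s<N. Zw d w (X s) - quadform d Jm w)"
    unfolding quadform_Mhat using N by (simp add: sum_subtractf field_simps)
  finally show ?thesis .
qed

lemma vnorm_L2: "vnorm d v = L2_set v {..<d}"
  by (simp add: vnorm_def L2_set_def)

lemma matvec_add: "matvec d (\<lambda>i j. A i j + B i j) v i = matvec d A v i + matvec d B v i"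
  by (simp add: matvec_def sum.distrib algebra_simps)

lemma ns_matvec_Jm:
  assumes d: "2 \<le> d"
  shows "ns d (matvec d Jm v) \<le> ns d v"
proof -
  have "ns d (matvec d Jm v) = (\<Sum>i<d. (if i = 0 then (v 1)\<^sup>2 else 0) + (if i = 1 then (v 0)\<^sup>2 else 0))"
    unfolding ns_def matvec_Jm[OF d] by (intro sum.cong refl) (auto simp: power2_eq_square)
  also have "\<dots> = (v 1)\<^sup>2 + (v 0)\<^sup>2" using d by (simp add: sum.distrib)
  also have "\<dots> \<le> ns d v" using sum01_le[OF d, of v] by (simp add: ns_def)
  finally show ?thesis .
qed

lemma opnorm_le:
  assumes d: "2 \<le> d" and N: "1 \<le> N" and t0: "0 \<le> t"
    and H: "\<And>w. w \<in> net d \<Longrightarrow> \<bar>quadform d (Am N X) w\<bar> \<le> t"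
  shows "opnorm d (Mhat N X) \<le> 1 + 2 * t"
proof -
  have d1: "1 \<le> d" using d by simp
  have qq: "\<And>u. \<bar>quadform d (Am N X) u\<bar> \<le> (2 * t) * ns d u"
    using net_quad[OF symm_Am d1 H] by simp
  have bnd: "vnorm d (matvec d (Mhat N X) v) \<le> 1 + 2 * t" if v: "vnorm d v \<le> 1" for v
  proof -
    have nv: "ns d v \<le> 1" using v by (simp add: vnorm_ns)
    have eq: "matvec d (Mhat N X) v = (\<lambda>i. matvec d Jm v i + matvec d (Am N X) v i)"
    proof
      fix i
      have "Mhat N X = (\<lambda>i j. Jm i j + Am N X i j)" by (simp add: Am_def fun_eq_iff)
      then show "matvec d (Mhat N X) v i = matvec d Jm v i + matvec d (Am N X) v i"
        using matvec_add[of d Jm "Am N X" v i] by simp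
    qed
    have "vnorm d (matvec d (Mhat N X) v) \<le> vnorm d (matvec d Jm v) + vnorm d (matvec d (Am N X) v)"
      unfolding eq vnorm_L2 by (rule L2_set_triangle_ineq)
    also have "vnorm d (matvec d Jm v) \<le> 1"
      using ns_matvec_Jm[OF d, of v] nv by (simp add: vnorm_ns)
    also have "vnorm d (matvec d (Am N X) v) \<le> 2 * t"
      by (rule matvec_bound[OF symm_Am qq _ nv]) (use t0 in simp)
    finally show ?thesis by simp
  qed
  have z: "vnorm d (\<lambda>_. 0) \<le> 1" by (simp add: vnorm_def)
  have ne: "{vnorm d (matvec d (Mhat N X) v) | v. vnorm d v \<le> 1} \<noteq> {}" using z by blast
  show ?thesis unfolding opnorm_def
    by (rule cSup_least[OF ne]) (use bnd in blast)
qed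

lemma prob_bad_w:
  assumes d: "2 \<le> d" and N: "1 \<le> N" and w: "w \<in> net d" and tau: "0 \<le> \<tau>"
  shows "measure_pmf.prob (pmf_of_set (samples N d)) {X. \<tau> < \<bar>quadform d (Am N X) w\<bar>}
           \<le> 2 * exp (- real N * min (\<tau>\<^sup>2/(4*4800)) (\<tau>/16))"
proof -
  define f where "f = (\<lambda>x. Zw d w x - quadform d Jm w)"
  define P where "P = Pi_pmf {..<N} (\<lambda>_. 0) (\<lambda>_. Qd d)"
  have wn: "(\<Sum>i<d. (w i)\<^sup>2) \<le> 1" using w by (simp add: net_def ns_def)
  have Npos: "0 < real N" using N by simp
  have sub: "{X. \<tau> < \<bar>quadform d (Am N X) w\<bar>}
      \<subseteq> {X. real N * \<tau> \<le> (\<Sum>s<N. f (X s))} \<union> {X. real N * \<tau> \<le> (\<Sum>s<N. (\<lambda>x. - f x) (X s))}"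
  proof
    fix X assume "X \<in> {X. \<tau> < \<bar>quadform d (Am N X) w\<bar>}"
    then have a: "\<tau> < \<bar>(1 / real N) * (\<Sum>s<N. f (X s))\<bar>"
      using quadform_Am[OF N, of d X w] by (simp add: f_def)
    have "real N * \<tau> < \<bar>\<Sum>s<N. f (X s)\<bar>"
    proof -
      have "\<bar>(1 / real N) * (\<Sum>s<N. f (X s))\<bar> = \<bar>\<Sum>s<N. f (X s)\<bar> / real N"
        using Npos by (simp add: abs_mult)
      then show ?thesis using a Npos by (simp add: field_simps)
    qed
    then show "X \<in> {X. real N * \<tau> \<le> (\<Sum>s<N. f (X s))} \<union> {X. real N * \<tau> \<le> (\<Sum>s<N. (\<lambda>x. - f x) (X s))}"
      by (auto simp: sum_negf abs_if split: if_splits)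
  qed
  have mgf1: "measure_pmf.expectation (Qd d) (\<lambda>x. exp (l * f x)) \<le> exp (4800 * l\<^sup>2)"
    if "0 \<le> l" "l \<le> 1/8" for l
    unfolding f_def by (rule mgf_W[OF d wn]) (use that in simp)
  have mgf2: "measure_pmf.expectation (Qd d) (\<lambda>x. exp (l * (\<lambda>x. - f x) x)) \<le> exp (4800 * l\<^sup>2)"
    if "0 \<le> l" "l \<le> 1/8" for l
  proof -
    have "measure_pmf.expectation (Qd d) (\<lambda>x. exp (l * (\<lambda>x. - f x) x))
        = measure_pmf.expectation (Qd d) (\<lambda>x. exp ((- l) * f x))" by simp
    also have "\<dots> \<le> exp (4800 * (- l)\<^sup>2)"
      unfolding f_def by (rule mgf_W[OF d wn]) (use that in simp)
    finally show ?thesis by simp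
  qed
  have "measure_pmf.prob (pmf_of_set (samples N d)) {X. \<tau> < \<bar>quadform d (Am N X) w\<bar>}
      \<le> measure_pmf.prob P ({X. real N * \<tau> \<le> (\<Sum>s<N. f (X s))} \<union> {X. real N * \<tau> \<le> (\<Sum>s<N. (\<lambda>x. - f x) (X s))})"
    unfolding P_eq P_def by (rule measure_pmf.finite_measure_mono[OF sub]) simp
  also have "\<dots> \<le> measure_pmf.prob P {X. real N * \<tau> \<le> (\<Sum>s<N. f (X s))}
                 + measure_pmf.prob P {X. real N * \<tau> \<le> (\<Sum>s<N. (\<lambda>x. - f x) (X s))}"
    by (rule measure_Un_le) auto
  also have "\<dots> \<le> exp (- real N * min (\<tau>\<^sup>2/(4*4800)) (\<tau>/16)) + exp (- real N * min (\<tau>\<^sup>2/(4*4800)) (\<tau>/16))"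
    unfolding P_def
    by (intro add_mono chernoff[OF finite_set_pmf_Qd _ tau] mgf1 mgf2) auto
  finally show ?thesis by simp
qed

lemma prob_bad:
  assumes d: "2 \<le> d" and N: "1 \<le> N" and tau: "0 \<le> \<tau>"
  shows "measure_pmf.prob (pmf_of_set (samples N d)) {X. \<exists>w\<in>net d. \<tau> < \<bar>quadform d (Am N X) w\<bar>}
           \<le> real (card (net d)) * (2 * exp (- real N * min (\<tau>\<^sup>2/(4*4800)) (\<tau>/16)))"
proof -
  have eq: "{X. \<exists>w\<in>net d. \<tau> < \<bar>quadform d (Am N X) w\<bar>} = (\<Union>w\<in>net d. {X. \<tau> < \<bar>quadform d (Am N X) w\<bar>})"
    by auto
  have "measure_pmf.prob (pmf_of_set (samples N d)) (\<Union>w\<in>net d. {X. \<tau> < \<bar>quadform d (Am N X) w\<bar>})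
     \<le> (\<Sum>w\<in>net d. measure_pmf.prob (pmf_of_set (samples N d)) {X. \<tau> < \<bar>quadform d (Am N X) w\<bar>})"
    by (rule measure_pmf.finite_measure_subadditive_finite[OF finite_net]) auto
  also have "\<dots> \<le> (\<Sum>w\<in>net d. 2 * exp (- real N * min (\<tau>\<^sup>2/(4*4800)) (\<tau>/16)))"
    by (intro sum_mono prob_bad_w[OF d N _ tau])
  also have "\<dots> = real (card (net d)) * (2 * exp (- real N * min (\<tau>\<^sup>2/(4*4800)) (\<tau>/16)))"
    by simp
  finally show ?thesis unfolding eq .
qed

lemma card_net_bound:
  assumes d: "2 \<le> d"
  shows "real (card (net d)) \<le> (2 * real d) ^ (4 * d)"
proof -
  have "real (card (net d)) \<le> real ((32 * d + 1) ^ d)"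
    using card_net[of d] by linarith
  also have "\<dots> = (32 * real d + 1) ^ d" by (simp add: add.commute)
  also have "\<dots> \<le> ((2 * real d) ^ 4) ^ d"
  proof (rule power_mono)
    have d2: "2 \<le> real d" using d by simp
    have "8 \<le> real d ^ 3"
    proof -
      have "(2::real) ^ 3 \<le> real d ^ 3" by (rule power_mono[OF d2]) simp
      then show ?thesis by simp
    qed
    then have "8 * real d \<le> real d ^ 3 * real d" using d2 by (intro mult_right_mono) auto
    then have "8 * real d \<le> real d ^ 4" by (simp add: power_Suc2[symmetric] del: power_Suc)
    then show "32 * real d + 1 \<le> (2 * real d) ^ 4" using d2 by (simp add: power_mult_distrib)
  qed simp
  also have "\<dots> = (2 * real d) ^ (4 * d)" by (simp add: power_mult)
  finally show ?thesis .
qed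

lemma Lambda_bound:
  assumes d: "2 \<le> d" and del: "0 < \<delta>" "\<delta> < 1" and c: "1 \<le> c" "c \<le> (2 * real d) ^ (4 * d)"
  shows "ln (2 * c / \<delta>) \<le> 5 * real d * ln (2 * real d / \<delta>)"
proof -
  define b where "b = 2 * real d / \<delta>"
  have d2: "2 \<le> real d" using d by simp
  have b1: "2 * real d \<le> b" unfolding b_def using del d2 by (simp add: field_simps)
  have b2: "2 / \<delta> \<le> b" unfolding b_def using del d2 by (intro divide_right_mono) auto
  have bge1: "1 \<le> b" using b1 d2 by linarith
  have "2 * c / \<delta> = (2 / \<delta>) * c" by simp
  also have "\<dots> \<le> b * (2 * real d) ^ (4 * d)"
    using b2 c del bge1 by (intro mult_mono) auto
  also have "\<dots> \<le> b * b ^ (4 * d)"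
    using b1 bge1 d2 by (intro mult_left_mono power_mono) auto
  also have "\<dots> = b ^ (4 * d + 1)" by simp
  finally have le: "2 * c / \<delta> \<le> b ^ (4 * d + 1)" .
  have pos: "0 < 2 * c / \<delta>" using c del by simp
  have "ln (2 * c / \<delta>) \<le> ln (b ^ (4 * d + 1))" using le pos by simp
  also have "\<dots> = real (4 * d + 1) * ln b" by (rule ln_realpow)
  also have "\<dots> \<le> 5 * real d * ln b"
  proof -
    have "0 \<le> ln b" using bge1 by simp
    moreover have "real (4 * d + 1) \<le> 5 * real d" using d by simp
    ultimately show ?thesis by (intro mult_right_mono) auto
  qed
  finally show ?thesis by (simp add: b_def)
qed

lemma samples_finite_ne: "finite (samples N d)" "samples N d \<noteq> {}"
  unfolding samples_eq by (auto intro!: finite_PiE_dflt simp: finite_cubeset cubeset_ne)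

lemma main_bound:
  fixes d N :: nat and \<delta> \<alpha> a0 astar :: real and w0 :: "nat \<Rightarrow> real"
  assumes d: "2 \<le> d" and N: "1 \<le> N" and del: "0 < \<delta>" "\<delta> < 1" and al: "0 < \<alpha>"
    and ast: "astar \<le> min 1 (1 / (2 * \<alpha> * Bnd 1000 N d \<delta>))"
  shows "measure_pmf.prob (pmf_of_set (samples N d)) {X. stable_event N d \<alpha> a0 w0 astar X} \<ge> 1 - \<delta>"
proof -
  define P where "P = pmf_of_set (samples N d)"
  define cn where "cn = real (card (net d))"
  define L where "L = ln (2 * real d / \<delta>)"
  define Lam where "Lam = ln (2 * cn / \<delta>)"
  define \<tau> where "\<tau> = sqrt (4*4800 * Lam / real N) + 16 * Lam / real N"
  define B where "B = Bnd 1000 N d \<delta>"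
  define Bad where "Bad = {X. \<exists>w\<in>net d. \<tau> < \<bar>quadform d (Am N X) w\<bar>}"
  have Np: "0 < real N" using N by simp
  have d2: "2 \<le> real d" using d by simp
  have cn1: "1 \<le> cn"
  proof -
    have "card (net d) \<noteq> 0" using finite_net zero_in_net by (auto simp: card_eq_0_iff)
    then show ?thesis by (simp add: cn_def)
  qed
  have cnle: "cn \<le> (2 * real d) ^ (4 * d)" unfolding cn_def by (rule card_net_bound[OF d])
  have Lam_le: "Lam \<le> 5 * real d * L"
    unfolding Lam_def L_def by (rule Lambda_bound[OF d del cn1 cnle])
  have Lam0: "0 \<le> Lam"
  proof -
    have "1 \<le> 2 * cn / \<delta>" using cn1 del by (simp add: field_simps)
    then show ?thesis unfolding Lam_def by simp
  qed
  have L0: "0 \<le> L"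
  proof -
    have "1 \<le> 2 * real d / \<delta>" using d2 del by (simp add: field_simps)
    then show ?thesis unfolding L_def by simp
  qed
  have tau0: "0 \<le> \<tau>" unfolding \<tau>_def using Lam0 Np by simp
  have m1: "Lam / real N \<le> \<tau>\<^sup>2 / (4*4800)"
  proof -
    have s0: "0 \<le> 4*4800 * Lam / real N" using Lam0 Np by simp
    have "sqrt (4*4800 * Lam / real N) \<le> \<tau>" unfolding \<tau>_def using Lam0 Np by simp
    then have "(sqrt (4*4800 * Lam / real N))\<^sup>2 \<le> \<tau>\<^sup>2" using s0 Lam0 Np by (intro power_mono) auto
    then have "4*4800 * Lam / real N \<le> \<tau>\<^sup>2" using s0 by simp
    then show ?thesis by (simp add: field_simps)
  qed
  have m2: "Lam / real N \<le> \<tau> / 16"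
  proof -
    have "16 * Lam / real N \<le> \<tau>" unfolding \<tau>_def using Lam0 Np by simp
    then show ?thesis by (simp add: field_simps)
  qed
  have "Lam \<le> real N * min (\<tau>\<^sup>2/(4*4800)) (\<tau>/16)"
  proof -
    have "real N * (Lam / real N) \<le> real N * min (\<tau>\<^sup>2/(4*4800)) (\<tau>/16)"
      using m1 m2 by (intro mult_left_mono) auto
    then show ?thesis using Np by simp
  qed
  then have "exp (- real N * min (\<tau>\<^sup>2/(4*4800)) (\<tau>/16)) \<le> exp (- Lam)" by simp
  also have "exp (- Lam) = \<delta> / (2 * cn)"
    unfolding Lam_def using cn1 del by (simp add: exp_minus exp_ln)
  finally have ex: "exp (- real N * min (\<tau>\<^sup>2/(4*4800)) (\<tau>/16)) \<le> \<delta> / (2 * cn)" .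
  have pBad: "measure_pmf.prob P Bad \<le> \<delta>"
  proof -
    have "measure_pmf.prob P Bad \<le> cn * (2 * exp (- real N * min (\<tau>\<^sup>2/(4*4800)) (\<tau>/16)))"
      unfolding P_def Bad_def cn_def by (rule prob_bad[OF d N tau0])
    also have "\<dots> \<le> cn * (2 * (\<delta> / (2 * cn)))"
      using ex cn1 by (intro mult_left_mono) auto
    also have "\<dots> = \<delta>" using cn1 by simp
    finally show ?thesis .
  qed
  define r where "r = real d * L / real N"
  have r0: "0 \<le> r" unfolding r_def using L0 Np by simp
  have Beq: "B = 1 + 1000 * (sqrt r + r)" unfolding B_def Bnd_def r_def L_def ..
  have B1: "1 \<le> B" unfolding Beq using r0 by simp
  have tauB: "1 + 2 * \<tau> \<le> B"
  proof -
    have a: "4*4800 * Lam / real N \<le> 96000 * r"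
    proof -
      have "4*4800 * Lam \<le> 4*4800 * (5 * real d * L)" using Lam_le by (simp add: mult_ac)
      then have "4*4800 * Lam / real N \<le> 4*4800 * (5 * real d * L) / real N"
        using Np by (intro divide_right_mono) auto
      then show ?thesis by (simp add: r_def)
    qed
    have "sqrt (4*4800 * Lam / real N) \<le> sqrt (96000 * r)" using a by simp
    also have "\<dots> = sqrt 96000 * sqrt r" by (simp add: real_sqrt_mult)
    also have "\<dots> \<le> 310 * sqrt r"
    proof -
      have "sqrt 96000 \<le> sqrt (310\<^sup>2)" by (intro real_sqrt_le_mono) simp
      then have "sqrt 96000 \<le> (310::real)" by simp
      then show ?thesis using r0 by (intro mult_right_mono) auto
    qed
    finally have s1: "sqrt (4*4800 * Lam / real N) \<le> 310 * sqrt r" .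
    have s2: "16 * Lam / real N \<le> 80 * r"
    proof -
      have "16 * Lam \<le> 16 * (5 * real d * L)" using Lam_le by (simp add: mult_ac)
      then have "16 * Lam / real N \<le> 16 * (5 * real d * L) / real N"
        using Np by (intro divide_right_mono) auto
      then show ?thesis by (simp add: r_def)
    qed
    have "2 * \<tau> \<le> 620 * sqrt r + 160 * r"
    proof -
      define x1 where "x1 = sqrt (4*4800 * Lam / real N)"
      define x2 where "x2 = 16 * Lam / real N"
      have t: "\<tau> = x1 + x2" unfolding \<tau>_def x1_def x2_def ..
      have u1: "2 * x1 \<le> 620 * sqrt r" using s1 unfolding x1_def[symmetric] by linarith
      have u2: "2 * x2 \<le> 160 * r" using s2 unfolding x2_def[symmetric] by linarith
      have "2 * \<tau> = 2 * x1 + 2 * x2" unfolding t by (rule distrib_left)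
      then show ?thesis using add_mono[OF u1 u2] by simp
    qed
    also have "\<dots> \<le> 1000 * (sqrt r + r)" using r0 by simp
    finally show ?thesis unfolding Beq by simp
  qed
  have good: "stable_event N d \<alpha> a0 w0 astar X" if X: "X \<notin> Bad" for X
  proof -
    have H: "\<bar>quadform d (Am N X) w\<bar> \<le> \<tau>" if "w \<in> net d" for w
      using X that unfolding Bad_def by auto
    have op: "opnorm d (Mhat N X) \<le> B"
      using opnorm_le[OF d N tau0 H] tauB by linarith
    have ast2: "astar \<le> 1 / (2 * \<alpha> * B)" using ast by (simp add: B_def)
    show ?thesis unfolding stable_event_def
    proof (intro allI impI)
      fix t
      assume "\<forall>s\<le>t. \<bar>fst (traj d \<alpha> (Mhat N X) a0 w0 s)\<bar> < astar"
      then have at: "\<bar>fst (traj d \<alpha> (Mhat N X) a0 w0 t)\<bar> \<le> astar" by auto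
      define a where "a = \<bar>fst (traj d \<alpha> (Mhat N X) a0 w0 t)\<bar>"
      have a0': "0 \<le> a" by (simp add: a_def)
      have "\<alpha> * a * opnorm d (Mhat N X) \<le> \<alpha> * a * B"
        using op al a0' by (intro mult_left_mono) auto
      also have "\<dots> \<le> \<alpha> * astar * B"
        using at al B1 by (intro mult_right_mono mult_left_mono) (auto simp: a_def)
      also have "\<dots> \<le> \<alpha> * (1 / (2 * \<alpha> * B)) * B"
        using ast2 al B1 by (intro mult_right_mono mult_left_mono) auto
      also have "\<dots> = 1/2" using al B1 by simp
      finally show "\<alpha> * \<bar>fst (traj d \<alpha> (Mhat N X) a0 w0 t)\<bar> * opnorm d (Mhat N X) \<le> 1 / 2"
        by (simp add: a_def)
    qed
  qed
  have "1 - \<delta> \<le> 1 - measure_pmf.prob P Bad" using pBad by simp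
  also have "\<dots> = measure_pmf.prob P (space (measure_pmf P) - Bad)"
    by (rule measure_pmf.prob_compl[symmetric]) simp
  also have "\<dots> \<le> measure_pmf.prob P {X. stable_event N d \<alpha> a0 w0 astar X}"
    by (rule measure_pmf.finite_measure_mono) (auto intro: good)
  finally show ?thesis unfolding P_def .
qed

theorem corollary9:
  shows "\<exists>C>0. \<forall>(d::nat) (N::nat) (\<delta>::real) (\<alpha>::real) (w0::nat \<Rightarrow> real) (a0::real) (astar::real).
     2 \<le> d \<and> 1 \<le> N \<and> 0 < \<delta> \<and> \<delta> < 1 \<and> 0 < \<alpha> \<and> vnorm d w0 = 1 \<and>
     astar \<le> min 1 (1 / (2 * \<alpha> * Bnd C N d \<delta>)) \<longrightarrow>
     measure_pmf.prob (pmf_of_set (samples N d)) {X. stable_event N d \<alpha> a0 w0 astar X} \<ge> 1 - \<delta>"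
proof (intro exI[of _ "1000::real"] conjI allI impI)
  show "(0::real) < 1000" by simp
next
  fix d N :: nat and \<delta> \<alpha> a0 astar :: real and w0 :: "nat \<Rightarrow> real"
  assume H: "2 \<le> d \<and> 1 \<le> N \<and> 0 < \<delta> \<and> \<delta> < 1 \<and> 0 < \<alpha> \<and> vnorm d w0 = 1 \<and>
     astar \<le> min 1 (1 / (2 * \<alpha> * Bnd 1000 N d \<delta>))"
  then show "measure_pmf.prob (pmf_of_set (samples N d)) {X. stable_event N d \<alpha> a0 w0 astar X} \<ge> 1 - \<delta>"
    by (intro main_bound) auto
qed

end
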